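(* For every $n\ge 2$, it is possible to place $n-1$ queens on an $n\times n$ chessboard whose square $(i,j)$ ($1\le i,j\le n$) is labeled $|i-j|$ so that no two queens attack each other, where two queens attack each other if they lie in the same row, in the same column, or on squares with the same label.
   Context: The chessboard corresponds to the symmetric Toeplitz matrix $T_n$ with entries $t_{ij}=|i-j|$. *)

theory Defs
  imports Main
begin

definition board :: "nat \<Rightarrow> (nat \<times> nat) set" where
  "board n = {1..n} \<times> {1..n}"

definition label :: "nat \<times> nat \<Rightarrow> int" where
  "label p = \<bar>int (fst p) - int (snd p)\<bar>"

definition attacks :: "nat \<times> nat \<Rightarrow> nat \<times> nat \<Rightarrow> bool" where
  "attacks p q \<longleftrightarrow> fst p = fst q \<or> snd p = snd q \<or> label p = label q"

definition non_attacking :: "(nat \<times> nat) set \<Rightarrow> bool" where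
  "non_attacking Q \<longleftrightarrow> (\<forall>p\<in>Q. \<forall>q\<in>Q. p \<noteq> q \<longrightarrow> \<not> attacks p q)"

end

theory Submission
  imports Defs
begin

theorem theorem3:
  fixes n :: nat
  assumes "n \<ge> 2"
  shows "\<exists>Q. Q \<subseteq> board n \<and> card Q = n - 1 \<and> non_attacking Q"
proof -
  define A where "A = (\<lambda>m. (m+1, n-m)) ` {..< n div 2}"
  define B where "B = (\<lambda>m. (n-m, m+2)) ` {..< (n-1) div 2}"
  have sub: "A \<union> B \<subseteq> board n"
    unfolding A_def B_def board_def using assms by auto
  have cA: "card A = n div 2"
    unfolding A_def by (subst card_image) (auto simp: inj_on_def)
  have cB: "card B = (n-1) div 2"
    unfolding B_def by (subst card_image) (auto simp: inj_on_def)
  have disj: "A \<inter> B = {}"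
    unfolding A_def B_def by auto
  have card: "card (A \<union> B) = n - 1"
  proof -
    have "n div 2 + (n-1) div 2 = n - 1" using assms by presburger
    thus ?thesis using card_Un_disjoint[of A B] disj cA cB unfolding A_def B_def by simp
  qed
  have na: "non_attacking (A \<union> B)"
    unfolding non_attacking_def attacks_def label_def A_def B_def
    using assms by (auto split: abs_split; presburger)
  show ?thesis using sub card na by blast
qed

end
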